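(* Under the standing assumptions, let $H$ be a wide subgroupoid of $\mathcal G$ and set $\gamma(H)=\bigoplus_{h\in H}J_h$. Then $\gamma(H)$ is a $C(R)$-subalgebra of $R$ and $$\gamma(H)=V_R\big(R^{\beta_{\mathcal S_H}}\big),$$ where $\mathcal S_H=\{h\in H:J_h\neq\{0\}\}$ and $R^{\beta_{\mathcal S_H}}=\{r\in R:\beta_h(r1_{h^{-1}})=r1_h\ \text{for all } h\in\mathcal S_H\}$.
   Context: All rings and algebras are associative and unital. A groupoid is a nonempty set $\mathcal G$ with a partially defined associative multiplication in which every $g$ has an inverse $g^{-1}$, a left identity $r(g)=gg^{-1}$ and a right identity $d(g)=g^{-1}g$; $gh$ is defined iff $d(g)=r(h)$; $\mathcal G_0$ is the set of identities. A subgroupoid is a nonempty subset closed under inverses and defined products; it is wide if it contains $\mathcal G_0$. Standing assumptions: $K$ commutative ring, $R$ a $K$-algebra, $\mathcal G$ a finite groupoid, $\beta=(\{E_g\},\{\beta_g\})$ a unital action of $\mathcal G$ on $R$: $E_g=E_{r(g)}$ is an ideal of $R$, unital with identity $1_g$ (so $1_{g^{-1}}=1_{d(g)}$), $\beta_g:E_{g^{-1}}\to E_g$ a $K$-algebra isomorphism, $\beta_e=\mathrm{id}_{E_e}$ for $e\in\mathcal G_0$, $\beta_g\beta_h(x)=\beta_{gh}(x)$ whenever $d(g)=r(h)$, $x\in E_{h^{-1}}$; $R=\bigoplus_{e\in\mathcal G_0}E_e$; and $R$ is a $\beta$-Galois extension of $R^\beta=\{r\in R:\beta_g(r1_{g^{-1}})=r1_g\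 \forall g\}$: there exist $x_i,y_i\in R$ ($1\le i\le m$) with $\sum_i x_i\beta_g(y_i1_{g^{-1}})=1_g$ if $g\in\mathcal G_0$ and $=0$ otherwise. $C(R)$ is the center of $R$, $V_R(S)=\{r\in R: rs=sr\ \forall s\in S\}$. For $g\in\mathcal G$, $J_g=\{r\in E_g: r\beta_g(x1_{g^{-1}})=xr\ \forall x\in R\}$; the sum $\bigoplus_{h\in H}J_h$ is a direct sum inside $R$. *)

theory Defs
  imports Main
begin

definition gdom :: "('g \<Rightarrow> 'g \<Rightarrow> 'g) \<Rightarrow> ('g \<Rightarrow> 'g) \<Rightarrow> 'g \<Rightarrow> 'g" where
  "gdom m i g = m (i g) g"

definition gran :: "('g \<Rightarrow> 'g \<Rightarrow> 'g) \<Rightarrow> ('g \<Rightarrow> 'g) \<Rightarrow> 'g \<Rightarrow> 'g" where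
  "gran m i g = m g (i g)"

(* the product g h is defined iff d(g) = r(h) *)
definition groupoid :: "'g set \<Rightarrow> ('g \<Rightarrow> 'g \<Rightarrow> 'g) \<Rightarrow> ('g \<Rightarrow> 'g) \<Rightarrow> bool" where
  "groupoid G m i \<longleftrightarrow>
     G \<noteq> {} \<and>
     (\<forall>g\<in>G. i g \<in> G \<and> i (i g) = g) \<and>
     (\<forall>g\<in>G. \<forall>h\<in>G. gdom m i g = gran m i h \<longrightarrow>
         m g h \<in> G \<and> gdom m i (m g h) = gdom m i h \<and> gran m i (m g h) = gran m i g) \<and>
     (\<forall>g\<in>G. \<forall>h\<in>G. \<forall>k\<in>G. gdom m i g = gran m i h \<longrightarrow> gdom m i h = gran m i k \<longrightarrow>
         m (m g h) k = m g (m h k)) \<and>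
     (\<forall>g\<in>G. m (gran m i g) g = g \<and> m g (gdom m i g) = g)"

definition identities :: "'g set \<Rightarrow> ('g \<Rightarrow> 'g \<Rightarrow> 'g) \<Rightarrow> ('g \<Rightarrow> 'g) \<Rightarrow> 'g set" where
  "identities G m i = gran m i ` G"

definition wide_subgroupoid :: "'g set \<Rightarrow> 'g set \<Rightarrow> ('g \<Rightarrow> 'g \<Rightarrow> 'g) \<Rightarrow> ('g \<Rightarrow> 'g) \<Rightarrow> bool" where
  "wide_subgroupoid H G m i \<longleftrightarrow>
     H \<subseteq> G \<and> H \<noteq> {} \<and>
     (\<forall>h\<in>H. i h \<in> H) \<and>
     (\<forall>g\<in>H. \<forall>h\<in>H. gdom m i g = gran m i h \<longrightarrow> m g h \<in> H) \<and>
     identities G m i \<subseteq> H"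

definition two_sided_ideal :: "'r::ring set \<Rightarrow> bool" where
  "two_sided_ideal I \<longleftrightarrow> 0 \<in> I \<and> (\<forall>x\<in>I. \<forall>y\<in>I. x + y \<in> I) \<and> (\<forall>x\<in>I. - x \<in> I) \<and>
     (\<forall>x\<in>I. \<forall>r. r * x \<in> I \<and> x * r \<in> I)"

definition center :: "'r::ring set" where
  "center = {c. \<forall>x. c * x = x * c}"

definition centralizer :: "'r::ring set \<Rightarrow> 'r set" where
  "centralizer S = {r. \<forall>s\<in>S. r * s = s * r}"

definition subalgebra_over :: "'r::ring_1 set \<Rightarrow> 'r set \<Rightarrow> bool" where
  "subalgebra_over C S \<longleftrightarrow> 0 \<in> S \<and> 1 \<in> S \<and>
     (\<forall>x\<in>S. \<forall>y\<in>S. x + y \<in> S \<and> x * y \<in> S) \<and> (\<forall>x\<in>S. - x \<in> S) \<and>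
     (\<forall>c\<in>C. \<forall>x\<in>S. c * x \<in> S)"

(* E g = ideal E_g, one g = 1_g, beta g : E_{g^-1} \<rightarrow> E_g *)
definition unital_action ::
  "'g set \<Rightarrow> ('g \<Rightarrow> 'g \<Rightarrow> 'g) \<Rightarrow> ('g \<Rightarrow> 'g) \<Rightarrow> ('g \<Rightarrow> 'r::ring_1 set) \<Rightarrow> ('g \<Rightarrow> 'r) \<Rightarrow> ('g \<Rightarrow> 'r \<Rightarrow> 'r) \<Rightarrow> bool" where
  "unital_action G m i E one \<beta> \<longleftrightarrow>
     (\<forall>g\<in>G. E g = E (gran m i g)) \<and>
     (\<forall>g\<in>G. two_sided_ideal (E g)) \<and>
     (\<forall>g\<in>G. one g \<in> E g \<and> (\<forall>x\<in>E g. one g * x = x \<and> x * one g = x)) \<and>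
     (\<forall>g\<in>G. bij_betw (\<beta> g) (E (i g)) (E g) \<and>
        (\<forall>x\<in>E (i g). \<forall>y\<in>E (i g). \<beta> g (x + y) = \<beta> g x + \<beta> g y \<and> \<beta> g (x * y) = \<beta> g x * \<beta> g y) \<and>
        \<beta> g (one (i g)) = one g) \<and>
     (\<forall>e\<in>identities G m i. \<forall>x\<in>E e. \<beta> e x = x) \<and>
     (\<forall>g\<in>G. \<forall>h\<in>G. gdom m i g = gran m i h \<longrightarrow> (\<forall>x\<in>E (i h). \<beta> g (\<beta> h x) = \<beta> (m g h) x)) \<and>
     (\<forall>x. \<exists>f. (\<forall>e\<in>identities G m i. f e \<in> E e) \<and> x = (\<Sum>e\<in>identities G m i. f e)) \<and>
     (\<forall>f. (\<forall>e\<in>identities G m i. f e \<in> E e) \<and> (\<Sum>e\<in>identities G m i. f e) = 0 \<longrightarrow>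
          (\<forall>e\<in>identities G m i. f e = 0))"

definition galois_extension ::
  "'g set \<Rightarrow> ('g \<Rightarrow> 'g \<Rightarrow> 'g) \<Rightarrow> ('g \<Rightarrow> 'g) \<Rightarrow> ('g \<Rightarrow> 'r::ring_1) \<Rightarrow> ('g \<Rightarrow> 'r \<Rightarrow> 'r) \<Rightarrow> bool" where
  "galois_extension G m i one \<beta> \<longleftrightarrow>
     (\<exists>(n::nat) x y. \<forall>g\<in>G.
        (\<Sum>k\<in>{1..n}. x k * \<beta> g (y k * one (i g))) = (if g \<in> identities G m i then one g else 0))"

definition Jset :: "('g \<Rightarrow> 'g) \<Rightarrow> ('g \<Rightarrow> 'r::ring_1 set) \<Rightarrow> ('g \<Rightarrow> 'r) \<Rightarrow> ('g \<Rightarrow> 'r \<Rightarrow> 'r) \<Rightarrow> 'g \<Rightarrow> 'r set" where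
  "Jset i E one \<beta> g = {r \<in> E g. \<forall>x. r * \<beta> g (x * one (i g)) = x * r}"

definition gamma :: "('g \<Rightarrow> 'g) \<Rightarrow> ('g \<Rightarrow> 'r::ring_1 set) \<Rightarrow> ('g \<Rightarrow> 'r) \<Rightarrow> ('g \<Rightarrow> 'r \<Rightarrow> 'r) \<Rightarrow> 'g set \<Rightarrow> 'r set" where
  "gamma i E one \<beta> H = {(\<Sum>h\<in>H. f h) | f. \<forall>h\<in>H. f h \<in> Jset i E one \<beta> h}"

definition supp_set :: "('g \<Rightarrow> 'g) \<Rightarrow> ('g \<Rightarrow> 'r::ring_1 set) \<Rightarrow> ('g \<Rightarrow> 'r) \<Rightarrow> ('g \<Rightarrow> 'r \<Rightarrow> 'r) \<Rightarrow> 'g set \<Rightarrow> 'g set" where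
  "supp_set i E one \<beta> H = {h \<in> H. Jset i E one \<beta> h \<noteq> {0}}"

definition invariants :: "('g \<Rightarrow> 'g) \<Rightarrow> ('g \<Rightarrow> 'r::ring_1) \<Rightarrow> ('g \<Rightarrow> 'r \<Rightarrow> 'r) \<Rightarrow> 'g set \<Rightarrow> 'r set" where
  "invariants i one \<beta> S = {r. \<forall>h\<in>S. \<beta> h (r * one (i h)) = r * one h}"

end

theory Submission imports Defs begin

locale GA =
  fixes G :: "'g set" and m :: "'g \<Rightarrow> 'g \<Rightarrow> 'g" and i :: "'g \<Rightarrow> 'g"
    and E :: "'g \<Rightarrow> 'r::ring_1 set" and one :: "'g \<Rightarrow> 'r" and \<beta> :: "'g \<Rightarrow> 'r \<Rightarrow> 'r"
  assumes fin: "finite G" and grp: "groupoid G m i" and act: "unital_action G m i E one \<beta>"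
begin

abbreviation "dm \<equiv> gdom m i"
abbreviation "rn \<equiv> gran m i"
abbreviation "G0 \<equiv> identities G m i"

lemma inv_in: "g \<in> G \<Longrightarrow> i g \<in> G" and inv_inv: "g \<in> G \<Longrightarrow> i (i g) = g"
  using grp unfolding groupoid_def by auto

lemma mul: "g \<in> G \<Longrightarrow> h \<in> G \<Longrightarrow> dm g = rn h \<Longrightarrow> m g h \<in> G \<and> dm (m g h) = dm h \<and> rn (m g h) = rn g"
  using grp unfolding groupoid_def by blast

lemma assoc: "g \<in> G \<Longrightarrow> h \<in> G \<Longrightarrow> k \<in> G \<Longrightarrow> dm g = rn h \<Longrightarrow> dm h = rn k \<Longrightarrow> m (m g h) k = m g (m h k)"
  using grp unfolding groupoid_def by blast

lemma lunit: "g \<in> G \<Longrightarrow> m (rn g) g = g" and runit: "g \<in> G \<Longrightarrow> m g (dm g) = g"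
  using grp unfolding groupoid_def by blast+

lemma dom_inv: "g \<in> G \<Longrightarrow> dm (i g) = rn g" unfolding gdom_def gran_def using inv_inv by simp
lemma ran_inv: "g \<in> G \<Longrightarrow> rn (i g) = dm g" unfolding gdom_def gran_def using inv_inv by simp

lemma ran_eq: "rn g = m g (i g)" by (simp add: gran_def)
lemma dom_eq: "dm g = m (i g) g" by (simp add: gdom_def)

lemma ran_in: "g \<in> G \<Longrightarrow> rn g \<in> G"
  using mul[of g "i g"] inv_in ran_inv ran_eq by metis
lemma ran_ran: "g \<in> G \<Longrightarrow> rn (rn g) = rn g"
  using mul[of g "i g"] inv_in ran_inv ran_eq by metis
lemma dom_ran: "g \<in> G \<Longrightarrow> dm (rn g) = rn g"
  using mul[of g "i g"] inv_in ran_inv ran_eq dom_inv by metis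
lemma dom_in: "g \<in> G \<Longrightarrow> dm g \<in> G"
  using ran_in[of "i g"] inv_in ran_inv by metis
lemma ran_dom: "g \<in> G \<Longrightarrow> rn (dm g) = dm g"
  using ran_ran[of "i g"] inv_in ran_inv by metis

lemma G0_iff: "e \<in> G0 \<longleftrightarrow> e \<in> G \<and> rn e = e"
proof
  assume "e \<in> G0"
  then obtain g where "g \<in> G" "e = rn g" unfolding identities_def by blast
  then show "e \<in> G \<and> rn e = e" using ran_in ran_ran by simp
next
  assume "e \<in> G \<and> rn e = e"
  then show "e \<in> G0" unfolding identities_def by (metis image_eqI)
qed

lemma G0_dom: "e \<in> G0 \<Longrightarrow> dm e = e"
  using G0_iff dom_ran by metis

lemma G0_inv: "e \<in> G0 \<Longrightarrow> i e = e"
proof -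
  assume e: "e \<in> G0"
  then have eG: "e \<in> G" "rn e = e" "dm e = e" using G0_iff G0_dom by auto
  have "i e = m (i e) (dm (i e))" using runit[OF inv_in[OF eG(1)]] by simp
  also have "\<dots> = m (i e) e" using dom_inv eG by simp
  also have "\<dots> = dm e" by (simp add: dom_eq)
  finally show ?thesis using eG by simp
qed

lemma dom_G0: "g \<in> G \<Longrightarrow> dm g \<in> G0" using G0_iff dom_in ran_dom by blast
lemma ran_G0: "g \<in> G \<Longrightarrow> rn g \<in> G0" using G0_iff ran_in ran_ran by blast

lemma finG0: "finite G0" unfolding identities_def using fin by simp

lemmas A1 = act[unfolded unital_action_def, THEN conjunct1]
lemmas A2 = act[unfolded unital_action_def, THEN conjunct2, THEN conjunct1]
lemmas A3 = act[unfolded unital_action_def, THEN conjunct2, THEN conjunct2, THEN conjunct1]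
lemmas A4 = act[unfolded unital_action_def, THEN conjunct2, THEN conjunct2, THEN conjunct2, THEN conjunct1]
lemmas A5 = act[unfolded unital_action_def, THEN conjunct2, THEN conjunct2, THEN conjunct2, THEN conjunct2, THEN conjunct1]
lemmas A6 = act[unfolded unital_action_def, THEN conjunct2, THEN conjunct2, THEN conjunct2, THEN conjunct2, THEN conjunct2, THEN conjunct1]
lemmas A7 = act[unfolded unital_action_def, THEN conjunct2, THEN conjunct2, THEN conjunct2, THEN conjunct2, THEN conjunct2, THEN conjunct2, THEN conjunct1]
lemmas A8 = act[unfolded unital_action_def, THEN conjunct2, THEN conjunct2, THEN conjunct2, THEN conjunct2, THEN conjunct2, THEN conjunct2, THEN conjunct2]

lemma E_ran: "g \<in> G \<Longrightarrow> E g = E (rn g)" using A1 by blast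
lemma ideal: "g \<in> G \<Longrightarrow> two_sided_ideal (E g)" using A2 by blast
lemma zero_E: "g \<in> G \<Longrightarrow> 0 \<in> E g" using ideal by (simp add: two_sided_ideal_def)
lemma add_E: "g \<in> G \<Longrightarrow> a \<in> E g \<Longrightarrow> b \<in> E g \<Longrightarrow> a + b \<in> E g" using ideal by (simp add: two_sided_ideal_def)
lemma mulL_E: "g \<in> G \<Longrightarrow> a \<in> E g \<Longrightarrow> r * a \<in> E g" using ideal by (simp add: two_sided_ideal_def)
lemma mulR_E: "g \<in> G \<Longrightarrow> a \<in> E g \<Longrightarrow> a * r \<in> E g" using ideal by (simp add: two_sided_ideal_def)
lemma sum_E: assumes g: "g \<in> G" and fA: "finite A" and f: "\<And>a. a \<in> A \<Longrightarrow> f a \<in> E g" shows "sum f A \<in> E g"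
  using fA f by (induction A rule: finite_induct) (auto intro: zero_E[OF g] add_E[OF g])
lemma one_E: "g \<in> G \<Longrightarrow> one g \<in> E g" using A3 by blast
lemma one_l: "g \<in> G \<Longrightarrow> a \<in> E g \<Longrightarrow> one g * a = a" using A3 by blast
lemma one_r: "g \<in> G \<Longrightarrow> a \<in> E g \<Longrightarrow> a * one g = a" using A3 by blast
lemma beta_E: "g \<in> G \<Longrightarrow> a \<in> E (i g) \<Longrightarrow> \<beta> g a \<in> E g"
  using A4 by (meson bij_betw_apply)
lemma beta_add: "g \<in> G \<Longrightarrow> a \<in> E (i g) \<Longrightarrow> b \<in> E (i g) \<Longrightarrow> \<beta> g (a + b) = \<beta> g a + \<beta> g b"
  using A4 by blast
lemma beta_mul: "g \<in> G \<Longrightarrow> a \<in> E (i g) \<Longrightarrow> b \<in> E (i g) \<Longrightarrow> \<beta> g (a * b) = \<beta> g a * \<beta> g b"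
  using A4 by blast
lemma beta_one: "g \<in> G \<Longrightarrow> \<beta> g (one (i g)) = one g"
  using A4 by blast
lemma beta_id: "e \<in> G0 \<Longrightarrow> a \<in> E e \<Longrightarrow> \<beta> e a = a"
  using A5 by blast
lemma beta_comp: "g \<in> G \<Longrightarrow> h \<in> G \<Longrightarrow> dm g = rn h \<Longrightarrow> a \<in> E (i h) \<Longrightarrow> \<beta> g (\<beta> h a) = \<beta> (m g h) a"
  using A6 by blast
lemma decomp: "\<exists>f. (\<forall>e\<in>G0. f e \<in> E e) \<and> x = (\<Sum>e\<in>G0. f e)"
  using A7 by blast
lemma uniq: "(\<forall>e\<in>G0. f e \<in> E e) \<Longrightarrow> (\<Sum>e\<in>G0. f e) = 0 \<Longrightarrow> e \<in> G0 \<Longrightarrow> f e = 0"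
  using A8 by blast

lemma one_ran: "g \<in> G \<Longrightarrow> one g = one (rn g)"
proof -
  assume g: "g \<in> G"
  have r: "rn g \<in> G" using ran_in g by simp
  have "one (rn g) * one g = one g" using one_l[OF r] one_E[OF g] E_ran[OF g] by simp
  moreover have "one (rn g) * one g = one (rn g)" using one_r[OF g] one_E[OF r] E_ran[OF g] by simp
  ultimately show ?thesis by simp
qed

lemma E_inv: "g \<in> G \<Longrightarrow> E (i g) = E (dm g)"
  using E_ran[OF inv_in] ran_inv by simp
lemma one_inv: "g \<in> G \<Longrightarrow> one (i g) = one (dm g)"
  using one_ran[OF inv_in] ran_inv by simp

lemma disj: "e \<in> G0 \<Longrightarrow> f \<in> G0 \<Longrightarrow> e \<noteq> f \<Longrightarrow> a \<in> E e \<Longrightarrow> a \<in> E f \<Longrightarrow> a = 0"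
proof -
  assume e: "e \<in> G0" and f: "f \<in> G0" and ne: "e \<noteq> f" and a: "a \<in> E e" "a \<in> E f"
  define F where "F = (\<lambda>e'. (if e' = e then a else 0) + (if e' = f then - a else 0))"
  have "\<forall>e'\<in>G0. F e' \<in> E e'"
  proof
    fix e' assume e': "e' \<in> G0"
    then have e'G: "e' \<in> G" using G0_iff by blast
    have negE: "- a \<in> E f" using mulL_E[of f a "-1"] a f G0_iff by simp
    show "F e' \<in> E e'" unfolding F_def using ne a negE zero_E[OF e'G] by auto
  qed
  moreover have "(\<Sum>e\<in>G0. F e) = 0"
    unfolding F_def using e f finG0 by (simp add: sum.distrib)
  ultimately have "F e = 0" using uniq e by blast
  then show ?thesis unfolding F_def using ne by simp
qed

lemma comp_one:
  assumes f: "\<forall>e\<in>G0. f e \<in> E e" and e: "e \<in> G0"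
  shows "(\<Sum>e\<in>G0. f e) * one e = f e" "one e * (\<Sum>e\<in>G0. f e) = f e"
proof -
  have eG: "e \<in> G" using e G0_iff by blast
  have 1: "f e' * one e = (if e' = e then f e else 0)" if e': "e' \<in> G0" for e'
  proof (cases "e' = e")
    case True then show ?thesis using one_r[OF eG] f e by simp
  next
    case False
    have e'G: "e' \<in> G" using e' G0_iff by blast
    have "f e' * one e \<in> E e'" using mulR_E[OF e'G] f e' by blast
    moreover have "f e' * one e \<in> E e" using mulL_E[OF eG one_E[OF eG]] by blast
    ultimately show ?thesis using disj[OF e' e False] False by simp
  qed
  have 2: "one e * f e' = (if e' = e then f e else 0)" if e': "e' \<in> G0" for e'
  proof (cases "e' = e")
    case True then show ?thesis using one_l[OF eG] f e by simp
  next
    case False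
    have e'G: "e' \<in> G" using e' G0_iff by blast
    have "one e * f e' \<in> E e'" using mulL_E[OF e'G] f e' by blast
    moreover have "one e * f e' \<in> E e" using mulR_E[OF eG one_E[OF eG]] by blast
    ultimately show ?thesis using disj[OF e' e False] False by simp
  qed
  have "(\<Sum>e\<in>G0. f e) * one e = (\<Sum>e'\<in>G0. f e' * one e)" by (rule sum_distrib_right)
  also have "\<dots> = (\<Sum>e'\<in>G0. (if e' = e then f e else 0))" by (rule sum.cong) (auto simp only: 1)
  also have "\<dots> = f e" using e finG0 by (simp only: sum.delta if_True)
  finally show "(\<Sum>e\<in>G0. f e) * one e = f e" .
  have "one e * (\<Sum>e\<in>G0. f e) = (\<Sum>e'\<in>G0. one e * f e')" by (rule sum_distrib_left)
  also have "\<dots> = (\<Sum>e'\<in>G0. (if e' = e then f e else 0))" by (rule sum.cong) (auto simp only: 2)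
  also have "\<dots> = f e" using e finG0 by (simp only: sum.delta if_True)
  finally show "one e * (\<Sum>e\<in>G0. f e) = f e" .
qed

lemma central0: "e \<in> G0 \<Longrightarrow> one e * x = x * one e"
proof -
  assume e: "e \<in> G0"
  obtain f where f: "\<forall>e\<in>G0. f e \<in> E e" "x = (\<Sum>e\<in>G0. f e)" using decomp by blast
  show ?thesis unfolding f(2) using comp_one[OF f(1) e] by simp
qed

lemma central: "g \<in> G \<Longrightarrow> one g * x = x * one g"
proof -
  assume g: "g \<in> G"
  have "one (rn g) * x = x * one (rn g)" using central0[OF ran_G0[OF g]] .
  then show ?thesis unfolding one_ran[OF g, symmetric] .
qed

lemma sum_ones: "(\<Sum>e\<in>G0. one e) = 1"
proof -
  obtain f where f: "\<forall>e\<in>G0. f e \<in> E e" "1 = (\<Sum>e\<in>G0. f e)" using decomp by blast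
  have "\<forall>e\<in>G0. one e = f e"
  proof
    fix e assume e: "e \<in> G0"
    have "one e * (\<Sum>e\<in>G0. f e) = f e" using comp_one(2)[OF f(1) e] .
    then show "one e = f e" using f(2) by simp
  qed
  then have "(\<Sum>e\<in>G0. one e) = (\<Sum>e\<in>G0. f e)" by simp
  then show ?thesis using f(2) by simp
qed

lemma sum_ones_x: "(\<Sum>e\<in>G0. x * one e) = x"
proof -
  have "(\<Sum>e\<in>G0. x * one e) = x * (\<Sum>e\<in>G0. one e)" by (simp add: sum_distrib_left)
  then show ?thesis using sum_ones by simp
qed

lemma ortho: "g \<in> G \<Longrightarrow> h \<in> G \<Longrightarrow> rn g \<noteq> rn h \<Longrightarrow> a \<in> E g \<Longrightarrow> b \<in> E h \<Longrightarrow> a * b = 0"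
proof -
  assume g: "g \<in> G" and h: "h \<in> G" and ne: "rn g \<noteq> rn h" and a: "a \<in> E g" and b: "b \<in> E h"
  have "a * b \<in> E (rn g)" using mulR_E[OF g a] E_ran[OF g] by simp
  moreover have "a * b \<in> E (rn h)" using mulL_E[OF h b] E_ran[OF h] by simp
  ultimately show ?thesis using disj[OF ran_G0[OF g] ran_G0[OF h] ne] by blast
qed

lemma E_one: "g \<in> G \<Longrightarrow> g' \<in> G \<Longrightarrow> a \<in> E g \<Longrightarrow> a * one g' = (if rn g = rn g' then a else 0)"
proof -
  assume g: "g \<in> G" and g': "g' \<in> G" and a: "a \<in> E g"
  show ?thesis
  proof (cases "rn g = rn g'")
    case True
    then have "one g' = one g" using one_ran g g' by metis
    then show ?thesis using True one_r[OF g a] by simp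
  next
    case False
    then show ?thesis using ortho[OF g g' False a one_E[OF g']] by simp
  qed
qed

lemma one_idem: "g \<in> G \<Longrightarrow> one g * one g = one g" using one_l one_E by blast

definition P where "P g x = \<beta> g (x * one (i g))"

lemma in_inv: "g \<in> G \<Longrightarrow> x * one (i g) \<in> E (i g)"
  using mulL_E[OF inv_in one_E[OF inv_in]] by blast

lemma P_E: "g \<in> G \<Longrightarrow> P g x \<in> E g" unfolding P_def using beta_E in_inv by blast

lemma P_add: "g \<in> G \<Longrightarrow> P g (x + y) = P g x + P g y"
  unfolding P_def using beta_add in_inv by (simp add: distrib_right)

lemma P_mul: "g \<in> G \<Longrightarrow> P g (x * y) = P g x * P g y"
proof -
  assume g: "g \<in> G"
  have "x * y * one (i g) = (x * one (i g)) * (y * one (i g))"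
    using central[OF inv_in[OF g], of y] one_idem[OF inv_in[OF g]] by (metis mult.assoc)
  then show ?thesis unfolding P_def using beta_mul[OF g] in_inv[OF g] by simp
qed

lemma beta_zero: "g \<in> G \<Longrightarrow> \<beta> g 0 = 0"
  using beta_add[of g 0 0] zero_E[OF inv_in] by simp

lemma P_zero: "g \<in> G \<Longrightarrow> P g 0 = 0" unfolding P_def using beta_zero by simp

lemma P_sum: assumes g: "g \<in> G" and fA: "finite A" shows "P g (\<Sum>a\<in>A. f a) = (\<Sum>a\<in>A. P g (f a))"
  using fA by (induction A rule: finite_induct) (auto simp: P_zero[OF g] P_add[OF g])

lemma P_one: "g \<in> G \<Longrightarrow> P g 1 = one g" unfolding P_def using beta_one by simp

lemma P_G0: "e \<in> G0 \<Longrightarrow> P e x = x * one e"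
proof -
  assume e: "e \<in> G0"
  then have eG: "e \<in> G" using G0_iff by blast
  show ?thesis unfolding P_def G0_inv[OF e] using beta_id[OF e] mulL_E[OF eG one_E[OF eG]] by blast
qed

lemma P_comp: "g \<in> G \<Longrightarrow> k \<in> G \<Longrightarrow> dm g = rn k \<Longrightarrow> P g (P k y) = P (m g k) y"
proof -
  assume g: "g \<in> G" and k: "k \<in> G" and c: "dm g = rn k"
  have "one (i g) = one k" using one_inv[OF g] c one_ran[OF k] by simp
  then have "P k y * one (i g) = P k y" using one_r[OF k P_E[OF k]] by simp
  then have "P g (P k y) = \<beta> (m g k) (y * one (i k))"
    unfolding P_def using beta_comp[OF g k c in_inv[OF k]] by (simp add: P_def)
  moreover have "one (i (m g k)) = one (i k)"
    using one_inv mul[OF g k c] k by simp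
  ultimately show ?thesis unfolding P_def by simp
qed

lemma P_ortho: "g \<in> G \<Longrightarrow> h \<in> G \<Longrightarrow> rn h \<noteq> dm g \<Longrightarrow> P g (P h a) = 0"
proof -
  assume g: "g \<in> G" and h: "h \<in> G" and ne: "rn h \<noteq> dm g"
  have "P h a * one (i g) = 0"
    using E_one[OF h dom_in[OF g] P_E[OF h]] one_inv[OF g] ran_dom[OF g] ne by simp
  then show ?thesis unfolding P_def using beta_zero g by simp
qed

lemma P_on_E: "g \<in> G \<Longrightarrow> a \<in> E (i g) \<Longrightarrow> P g a = \<beta> g a"
  unfolding P_def using one_r inv_in by simp


lemma cancelL: "g \<in> G \<Longrightarrow> h \<in> G \<Longrightarrow> dm g = rn h \<Longrightarrow> m (i g) (m g h) = h"
proof -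
  assume g: "g \<in> G" and h: "h \<in> G" and c: "dm g = rn h"
  have "m (i g) (m g h) = m (m (i g) g) h"
    using assoc[OF inv_in[OF g] g h] dom_inv[OF g] c by simp
  also have "\<dots> = m (rn h) h" using c by (simp add: dom_eq)
  also have "\<dots> = h" using lunit[OF h] .
  finally show ?thesis .
qed

lemma cancelR: "g \<in> G \<Longrightarrow> k \<in> G \<Longrightarrow> rn k = rn g \<Longrightarrow> m g (m (i g) k) = k"
proof -
  assume g: "g \<in> G" and k: "k \<in> G" and c: "rn k = rn g"
  have "m g (m (i g) k) = m (m g (i g)) k"
    using assoc[OF g inv_in[OF g] k] dom_inv[OF g] ran_inv[OF g] c by simp
  also have "\<dots> = m (rn k) k" using c by (simp add: ran_eq)
  also have "\<dots> = k" using lunit[OF k] .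
  finally show ?thesis .
qed

end

locale GH = GA G m i E one \<beta> for G :: "'g set" and m i and E :: "'g \<Rightarrow> 'r::ring_1 set" and one \<beta> +
  fixes H :: "'g set" and n :: nat and x y :: "nat \<Rightarrow> 'r"
  assumes wide: "wide_subgroupoid H G m i"
    and gal: "\<forall>g\<in>G. (\<Sum>k\<in>{1..n}. x k * \<beta> g (y k * one (i g))) = (if g \<in> identities G m i then one g else 0)"
begin

lemma H_sub: "H \<subseteq> G" and H_inv: "h \<in> H \<Longrightarrow> i h \<in> H"
  and H_mul: "g \<in> H \<Longrightarrow> h \<in> H \<Longrightarrow> dm g = rn h \<Longrightarrow> m g h \<in> H"
  and G0_H: "G0 \<subseteq> H"
  using wide unfolding wide_subgroupoid_def by blast+

lemma finH: "finite H" using H_sub fin finite_subset by blast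

lemma HG: "h \<in> H \<Longrightarrow> h \<in> G" using H_sub by blast

lemma galP: "g \<in> G \<Longrightarrow> (\<Sum>k\<in>{1..n}. x k * P g (y k)) = (if g \<in> G0 then one g else 0)"
  using gal unfolding P_def by blast

definition tr where "tr a = (\<Sum>h\<in>H. P h a)"

lemma tr_inv: assumes g: "g \<in> H" shows "P g (tr a) = tr a * one g"
proof -
  have gG: "g \<in> G" using HG g .
  define A where "A = {h \<in> H. rn h = dm g}"
  define B where "B = {k \<in> H. rn k = rn g}"
  have bij: "bij_betw (m g) A B"
  proof (rule bij_betw_byWitness[where f' = "m (i g)"])
    show "\<forall>a\<in>A. m (i g) (m g a) = a" unfolding A_def using cancelL gG HG by auto
    show "\<forall>a'\<in>B. m g (m (i g) a') = a'" unfolding B_def using cancelR gG HG by auto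
    show "m g ` A \<subseteq> B" unfolding A_def B_def using H_mul g mul gG HG by auto
    show "m (i g) ` B \<subseteq> A"
    proof
      fix c assume "c \<in> m (i g) ` B"
      then obtain k where k: "k \<in> H" "rn k = rn g" "c = m (i g) k" unfolding B_def by blast
      have c1: "dm (i g) = rn k" using dom_inv[OF gG] k by simp
      have "c \<in> H" using H_mul[OF H_inv[OF g] k(1) c1] k by simp
      moreover have "rn c = dm g" using mul[OF inv_in[OF gG] HG[OF k(1)] c1] ran_inv[OF gG] k by simp
      ultimately show "c \<in> A" unfolding A_def by simp
    qed
  qed
  have "P g (tr a) = (\<Sum>h\<in>H. P g (P h a))" unfolding tr_def using P_sum[OF gG finH] .
  also have "\<dots> = (\<Sum>h\<in>H. if rn h = dm g then P (m g h) a else 0)"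
  proof (rule sum.cong)
    fix h assume h: "h \<in> H"
    show "P g (P h a) = (if rn h = dm g then P (m g h) a else 0)"
      using P_comp[OF gG HG[OF h]] P_ortho[OF gG HG[OF h]] by auto
  qed simp
  also have "\<dots> = (\<Sum>h\<in>A. P (m g h) a)" unfolding A_def by (rule sum.inter_filter[OF finH, symmetric])
  also have "\<dots> = (\<Sum>k\<in>B. P k a)" using sum.reindex_bij_betw[OF bij] .
  also have "\<dots> = (\<Sum>k\<in>H. if rn k = rn g then P k a else 0)" unfolding B_def using sum.inter_filter[OF finH] by simp
  also have "\<dots> = (\<Sum>k\<in>H. P k a * one g)"
    by (rule sum.cong) (use E_one[OF _ gG P_E] HG in auto)
  also have "\<dots> = tr a * one g" unfolding tr_def by (simp add: sum_distrib_right)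
  finally show ?thesis .
qed

lemma tr_in: "tr a \<in> invariants i one \<beta> H"
  unfolding invariants_def using tr_inv unfolding P_def by blast

lemma expand: "z = (\<Sum>k\<in>{1..n}. x k * tr (y k * z))"
proof -
  have "(\<Sum>k\<in>{1..n}. x k * tr (y k * z)) = (\<Sum>k\<in>{1..n}. \<Sum>h\<in>H. x k * P h (y k) * P h z)"
    unfolding tr_def by (rule sum.cong) (auto simp: sum_distrib_left P_mul HG mult.assoc)
  also have "\<dots> = (\<Sum>h\<in>H. \<Sum>k\<in>{1..n}. x k * P h (y k) * P h z)" by (rule sum.swap)
  also have "\<dots> = (\<Sum>h\<in>H. (\<Sum>k\<in>{1..n}. x k * P h (y k)) * P h z)" by (simp add: sum_distrib_right)
  also have "\<dots> = (\<Sum>h\<in>H. if h \<in> G0 then z * one h else 0)"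
  proof (rule sum.cong)
    fix h assume h: "h \<in> H"
    have hG: "h \<in> G" using HG h .
    show "(\<Sum>k\<in>{1..n}. x k * P h (y k)) * P h z = (if h \<in> G0 then z * one h else 0)"
    proof (cases "h \<in> G0")
      case True
      have "one h * (z * one h) = z * one h"
        using central[OF hG, of z] one_idem[OF hG] by (metis mult.assoc)
      then show ?thesis using galP[OF hG] True P_G0[OF True] by simp
    qed (use galP[OF hG] in simp)
  qed simp
  also have "\<dots> = (\<Sum>h\<in>{h\<in>H. h \<in> G0}. z * one h)" by (rule sum.inter_filter[OF finH, symmetric])
  also have "{h\<in>H. h \<in> G0} = G0" using G0_H by blast
  finally show ?thesis using sum_ones_x by simp
qed

definition w where "w v h = (\<Sum>k\<in>{1..n}. x k * v * P h (y k))"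

lemma formula: assumes v: "\<forall>t\<in>invariants i one \<beta> H. v * t = t * v"
  shows "z * v = (\<Sum>h\<in>H. w v h * P h z)"
proof -
  have "z * v = (\<Sum>k\<in>{1..n}. x k * tr (y k * z)) * v" using expand by simp
  also have "\<dots> = (\<Sum>k\<in>{1..n}. x k * (v * tr (y k * z)))"
    by (simp add: sum_distrib_right v tr_in mult.assoc)
  also have "\<dots> = (\<Sum>k\<in>{1..n}. \<Sum>h\<in>H. x k * v * P h (y k) * P h z)"
    unfolding tr_def by (rule sum.cong) (auto simp: sum_distrib_left P_mul HG mult.assoc)
  also have "\<dots> = (\<Sum>h\<in>H. \<Sum>k\<in>{1..n}. x k * v * P h (y k) * P h z)" by (rule sum.swap)
  also have "\<dots> = (\<Sum>h\<in>H. w v h * P h z)" unfolding w_def by (simp add: sum_distrib_right)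
  finally show ?thesis .
qed

lemma w_E: "h \<in> G \<Longrightarrow> w v h \<in> E h"
  unfolding w_def by (rule sum_E) (auto intro: mulL_E P_E)

lemma v_sum: assumes v: "\<forall>t\<in>invariants i one \<beta> H. v * t = t * v"
  shows "v = (\<Sum>h\<in>H. w v h)"
proof -
  have "v = (\<Sum>h\<in>H. w v h * P h 1)" using formula[OF v, of 1] by simp
  also have "\<dots> = (\<Sum>h\<in>H. w v h)" by (rule sum.cong) (auto simp: P_one HG one_r w_E)
  finally show ?thesis .
qed

lemma D: assumes g: "g \<in> G" and h: "h \<in> G"
  shows "(\<Sum>k\<in>{1..n}. P g (x k) * P h (y k)) = (if g = h then one h else 0)"
proof (cases "rn g = rn h")
  case False
  then have "g \<noteq> h" by auto
  then show ?thesis using ortho[OF g h False P_E[OF g] P_E[OF h]] by simp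
next
  case True
  define k0 where "k0 = m (i g) h"
  have c1: "dm (i g) = rn h" using dom_inv[OF g] True by simp
  have k0: "k0 \<in> G" "rn k0 = dm g" "dm k0 = dm h"
    using mul[OF inv_in[OF g] h c1] ran_inv[OF g] unfolding k0_def by auto
  have gk: "m g k0 = h" unfolding k0_def using cancelR[OF g h] True by simp
  have c2: "dm g = rn k0" using k0 by simp
  have "(\<Sum>k\<in>{1..n}. P g (x k) * P h (y k)) = (\<Sum>k\<in>{1..n}. P g (x k * P k0 (y k)))"
    by (rule sum.cong) (auto simp: P_mul[OF g] P_comp[OF g k0(1) c2] gk)
  also have "\<dots> = P g (\<Sum>k\<in>{1..n}. x k * P k0 (y k))" by (rule P_sum[OF g finite_atLeastAtMost, symmetric])
  also have "\<dots> = P g (if k0 \<in> G0 then one k0 else 0)" using galP[OF k0(1)] by simp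
  also have "\<dots> = (if g = h then one h else 0)"
  proof (cases "g = h")
    case True
    have "k0 = dm g" unfolding k0_def True by (simp add: dom_eq)
    then have "k0 \<in> G0" "one k0 = one (i g)" using dom_G0[OF g] one_inv[OF g] by auto
    then show ?thesis using True P_def beta_one[OF g] one_idem[OF inv_in[OF g]] by simp
  next
    case False
    have "k0 \<notin> G0"
    proof
      assume "k0 \<in> G0"
      then have "k0 = dm g" using G0_iff k0 by metis
      then have "h = g" using gk runit[OF g] by simp
      then show False using False by simp
    qed
    then show ?thesis using False P_zero[OF g] by simp
  qed
  finally show ?thesis .
qed

lemma w_J: assumes v: "\<forall>t\<in>invariants i one \<beta> H. v * t = t * v" and h: "h \<in> H"
  shows "w v h \<in> Jset i E one \<beta> h"
proof -
  have hG: "h \<in> G" using HG h .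
  have "z * w v h = w v h * P h z" for z
  proof -
    have "z * w v h = (\<Sum>k\<in>{1..n}. (z * x k * v) * P h (y k))"
      unfolding w_def by (simp add: sum_distrib_left mult.assoc)
    also have "\<dots> = (\<Sum>k\<in>{1..n}. \<Sum>g\<in>H. w v g * P g z * (P g (x k) * P h (y k)))"
      by (rule sum.cong) (auto simp: formula[OF v] sum_distrib_right P_mul HG mult.assoc)
    also have "\<dots> = (\<Sum>g\<in>H. \<Sum>k\<in>{1..n}. w v g * P g z * (P g (x k) * P h (y k)))" by (rule sum.swap)
    also have "\<dots> = (\<Sum>g\<in>H. w v g * P g z * (if g = h then one h else 0))"
    proof (rule sum.cong)
      fix g assume g: "g \<in> H"
      have "(\<Sum>k\<in>{1..n}. w v g * P g z * (P g (x k) * P h (y k))) = w v g * P g z * (\<Sum>k\<in>{1..n}. P g (x k) * P h (y k))"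
        by (rule sum_distrib_left[symmetric])
      then show "(\<Sum>k\<in>{1..n}. w v g * P g z * (P g (x k) * P h (y k))) = w v g * P g z * (if g = h then one h else 0)"
        using D[OF HG[OF g] hG] by simp
    qed simp
    also have "\<dots> = (\<Sum>g\<in>H. if g = h then w v h * P h z * one h else 0)"
      by (rule sum.cong) auto
    also have "\<dots> = w v h * P h z * one h" using finH h by simp
    also have "\<dots> = w v h * P h z" using one_r[OF hG P_E[OF hG]] by (simp add: mult.assoc)
    finally show ?thesis .
  qed
  then show ?thesis unfolding Jset_def P_def using w_E[OF hG] by simp
qed

end

lemma centralizer_subalg: "subalgebra_over center (centralizer X)"
  unfolding subalgebra_over_def centralizer_def center_def
  by (auto simp: algebra_simps) (metis mult.assoc)+

theorem lemma3p7:
  fixes G H :: "'g set" and m :: "'g \<Rightarrow> 'g \<Rightarrow> 'g" and i :: "'g \<Rightarrow> 'g"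
    and E :: "'g \<Rightarrow> 'r::ring_1 set" and one :: "'g \<Rightarrow> 'r" and \<beta> :: "'g \<Rightarrow> 'r \<Rightarrow> 'r"
  assumes "finite G" and "groupoid G m i"
    and "unital_action G m i E one \<beta>"
    and "galois_extension G m i one \<beta>"
    and "wide_subgroupoid H G m i"
  shows "subalgebra_over center (gamma i E one \<beta> H) \<and>
         gamma i E one \<beta> H = centralizer (invariants i one \<beta> (supp_set i E one \<beta> H))"
proof -
  obtain n :: nat and x y :: "nat \<Rightarrow> 'r" where gal: "\<forall>g\<in>G. (\<Sum>k\<in>{1..n}. x k * \<beta> g (y k * one (i g))) = (if g \<in> identities G m i then one g else 0)"
    using assms(4) unfolding galois_extension_def by blast
  interpret GH G m i E one \<beta> H n x y
    by (rule GH.intro, rule GA.intro[OF assms(1-3)], rule GH_axioms.intro[OF assms(5) gal])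
  define S where "S = supp_set i E one \<beta> H"
  have SH: "S \<subseteq> H" unfolding S_def supp_set_def by blast
  have eq: "gamma i E one \<beta> H = centralizer (invariants i one \<beta> S)"
  proof
    show "gamma i E one \<beta> H \<subseteq> centralizer (invariants i one \<beta> S)"
    proof
      fix r assume "r \<in> gamma i E one \<beta> H"
      then obtain f where f: "\<forall>h\<in>H. f h \<in> Jset i E one \<beta> h" "r = (\<Sum>h\<in>H. f h)"
        unfolding gamma_def by blast
      have "r * t = t * r" if t: "t \<in> invariants i one \<beta> S" for t
      proof -
        have "f h * t = t * f h" if h: "h \<in> H" for h
        proof (cases "h \<in> S")
          case True
          have hG: "h \<in> G" using HG h .
          have inv: "\<beta> h (t * one (i h)) = t * one h" using t True unfolding invariants_def by blast
          have J: "f h \<in> E h" "f h * \<beta> h (t * one (i h)) = t * f h"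
            using f(1) h unfolding Jset_def by blast+
          have "t * f h = f h * (one h * t)" using J(2) inv central[OF hG] by simp
          also have "\<dots> = f h * t" using one_r[OF hG J(1)] by (simp add: mult.assoc[symmetric])
          finally show ?thesis by simp
        next
          case False
          then have "Jset i E one \<beta> h = {0}" using h unfolding S_def supp_set_def by blast
          then have "f h = 0" using f(1) h by blast
          then show ?thesis by simp
        qed
        then show ?thesis unfolding f(2) by (simp add: sum_distrib_left sum_distrib_right)
      qed
      then show "r \<in> centralizer (invariants i one \<beta> S)" unfolding centralizer_def by blast
    qed
  next
    show "centralizer (invariants i one \<beta> S) \<subseteq> gamma i E one \<beta> H"
    proof
      fix v assume "v \<in> centralizer (invariants i one \<beta> S)"
      then have v: "\<forall>t\<in>invariants i one \<beta> H. v * t = t * v"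
        unfolding centralizer_def invariants_def using SH by blast
      show "v \<in> gamma i E one \<beta> H"
        unfolding gamma_def using v_sum[OF v] w_J[OF v] by blast
    qed
  qed
  show ?thesis using eq centralizer_subalg unfolding S_def by simp
qed

end
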